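(* Let $W_1$ and $W_2$ be arbitrary quantum walks on $\ell^2(\mathbb{Z})\otimes\mathbb{C}^2$, and let $W_1\oplus W_2$ be their direct sum on $\mathcal H=\mathcal H_e\oplus\mathcal H_o$ with respect to even and odd lattice sites (as described below). Then $$v(W_1\oplus W_2)=2\max\{v(W_1),v(W_2)\}.$$
   Context: $\mathcal H=\ell^2(\mathbb{Z})\otimes\mathbb{C}^2$ with basis $\delta_k^\pm=\delta_k\otimes e_\pm$. State-dependent shifts: $S_\pm=T^{\pm1}\otimes P_\pm+\mathbb{1}\otimes P_\mp$, where $T\delta_k=\delta_{k+1}$ and $P_\pm$ are the projections onto $e_+=(1,0)^\top$, $e_-=(0,1)^\top$. A coin operator acts as $C(\delta_k\otimes v)=\delta_k\otimes C(k)v$ with $C(k)$ unitary $2\times2$ matrices. A quantum walk is a finite product of shift operators $S_\pm$ and coin operators. $Q\delta_k^\pm=k\delta_k^\pm$ is the position operator. For a walk $W$ and normalized $\psi\in\mathrm{dom}(Q)$, $v(W,\psi)=\limsup_{t\to\infty}\frac1t\|QW^t\psi\|$, and $v(W)=\sup\{v(W,\psi):\psi\in\mathrm{dom}(Q),\|\psi\|=1\}$. The direct sum is taken with respect to $\mathcal H_e=\ell^2(2\mathbb{Z})\otimes\mathbb{C}^2$ and $\mathcal H_o=\ell^2(2\mathbb{Z}+1)\otimes\mathbb{C}^2$, each identified with $\ell^2(\mathbb{Z})\otimes\mathbb{C}^2$ via $\delta_{2k}^\pm\mapsto\delta_k^\pm$ and $\delta_{2k+1}^\pm\mapsto\delta_k^\pm$;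 $W_1$ acts on $\mathcal H_e$ and $W_2$ on $\mathcal H_o$. *)

theory Defs
  imports "HOL-Analysis.Analysis" "HOL-Library.Extended_Real"
begin

text \<open>Vectors in l2(Z) (x) C^2 are functions int => bool => complex;
  True stands for e_+, False for e_-. Operators are maps on such functions.\<close>

type_synonym state = "int \<Rightarrow> bool \<Rightarrow> complex"

definition l2norm :: "state \<Rightarrow> real" where
  "l2norm \<psi> = sqrt (infsum (\<lambda>(k, s). (cmod (\<psi> k s))\<^sup>2) UNIV)"

definition in_l2 :: "state \<Rightarrow> bool" where
  "in_l2 \<psi> \<longleftrightarrow> (\<lambda>(k, s). (cmod (\<psi> k s))\<^sup>2) summable_on UNIV"

definition Qop :: "state \<Rightarrow> state" where
  "Qop \<psi> = (\<lambda>k s. of_int k * \<psi> k s)"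

definition domQ :: "state set" where
  "domQ = {\<psi>. in_l2 \<psi> \<and> in_l2 (Qop \<psi>)}"

definition unitary2 :: "(bool \<Rightarrow> bool \<Rightarrow> complex) \<Rightarrow> bool" where
  "unitary2 C \<longleftrightarrow>
     (\<forall>i j. (\<Sum>l\<in>UNIV. cnj (C l i) * C l j) = (if i = j then 1 else 0)) \<and>
     (\<forall>i j. (\<Sum>l\<in>UNIV. C i l * cnj (C j l)) = (if i = j then 1 else 0))"

text \<open>S_+ = T (x) P_+ + 1 (x) P_-,  S_- = T^-1 (x) P_- + 1 (x) P_+, T delta_k = delta_(k+1).\<close>
definition Splus :: "state \<Rightarrow> state" where
  "Splus \<psi> = (\<lambda>k s. if s then \<psi> (k - 1) True else \<psi> k False)"

definition Sminus :: "state \<Rightarrow> state" where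
  "Sminus \<psi> = (\<lambda>k s. if s then \<psi> k True else \<psi> (k + 1) False)"

definition coin_op :: "(int \<Rightarrow> bool \<Rightarrow> bool \<Rightarrow> complex) \<Rightarrow> state \<Rightarrow> state" where
  "coin_op C \<psi> = (\<lambda>k s. \<Sum>s'\<in>UNIV. C k s s' * \<psi> k s')"

datatype gen = ShiftPlus | ShiftMinus | Coin "int \<Rightarrow> bool \<Rightarrow> bool \<Rightarrow> complex"

fun gen_op :: "gen \<Rightarrow> state \<Rightarrow> state" where
  "gen_op ShiftPlus = Splus"
| "gen_op ShiftMinus = Sminus"
| "gen_op (Coin C) = coin_op C"

definition valid_gen :: "gen \<Rightarrow> bool" where
  "valid_gen g \<longleftrightarrow> (\<forall>C. g = Coin C \<longrightarrow> (\<forall>k. unitary2 (C k)))"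

definition walk_op :: "gen list \<Rightarrow> state \<Rightarrow> state" where
  "walk_op gs = foldr (\<lambda>g W. gen_op g \<circ> W) gs id"

definition is_walk :: "gen list \<Rightarrow> bool" where
  "is_walk gs \<longleftrightarrow> (\<forall>g\<in>set gs. valid_gen g)"

definition vel_state :: "(state \<Rightarrow> state) \<Rightarrow> state \<Rightarrow> ereal" where
  "vel_state W \<psi> = limsup (\<lambda>t::nat. ereal (l2norm (Qop ((W ^^ t) \<psi>)) / real t))"

definition vel :: "(state \<Rightarrow> state) \<Rightarrow> ereal" where
  "vel W = (SUP \<psi>\<in>{\<psi>. \<psi> \<in> domQ \<and> l2norm \<psi> = 1}. vel_state W \<psi>)"

text \<open>Direct sum w.r.t. even / odd sites: delta_2k -> delta_k on H_e, delta_(2k+1) -> delta_k on H_o.\<close>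
definition walk_dsum :: "(state \<Rightarrow> state) \<Rightarrow> (state \<Rightarrow> state) \<Rightarrow> state \<Rightarrow> state" where
  "walk_dsum W1 W2 \<psi> = (\<lambda>n s.
      if even n then W1 (\<lambda>k. \<psi> (2 * k)) (n div 2) s
      else W2 (\<lambda>k. \<psi> (2 * k + 1)) (n div 2) s)"

end

theory Submission
  imports Defs
begin


definition sqf :: "state \<Rightarrow> int \<times> bool \<Rightarrow> real" where
  "sqf \<psi> = (\<lambda>(k, s). (cmod (\<psi> k s))\<^sup>2)"

lemma in_l2_sqf: "in_l2 \<psi> \<longleftrightarrow> sqf \<psi> summable_on UNIV"
  by (simp add: in_l2_def sqf_def)

lemma l2norm_sqf: "l2norm \<psi> = sqrt (infsum (sqf \<psi>) UNIV)"
  by (simp add: l2norm_def sqf_def)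

lemma sqf_nonneg: "sqf \<psi> p \<ge> 0"
  by (simp add: sqf_def split: prod.splits)

lemma l2norm_nonneg: "l2norm \<psi> \<ge> 0"
  unfolding l2norm_sqf by (simp add: infsum_nonneg sqf_nonneg)

lemma l2norm_sq: "(l2norm \<psi>)\<^sup>2 = infsum (sqf \<psi>) UNIV"
  unfolding l2norm_sqf by (simp add: infsum_nonneg sqf_nonneg)

lemma l2_fin:
  assumes "in_l2 \<psi>" "finite F"
  shows "sum (sqf \<psi>) F \<le> (l2norm \<psi>)\<^sup>2"
  unfolding l2norm_sq
  by (rule finite_sum_le_infsum) (use assms in \<open>auto simp: in_l2_sqf sqf_nonneg\<close>)

lemma l2_bound:
  assumes "\<And>F. finite F \<Longrightarrow> sum (sqf \<psi>) F \<le> B"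
  shows "in_l2 \<psi>" "l2norm \<psi> \<le> sqrt B"
proof -
  have s: "sqf \<psi> summable_on UNIV"
  proof (rule nonneg_bdd_above_summable_on)
    show "bdd_above (sum (sqf \<psi>) ` {F. F \<subseteq> UNIV \<and> finite F})"
      unfolding bdd_above_def using assms by blast
  qed (simp add: sqf_nonneg)
  then show "in_l2 \<psi>" by (simp add: in_l2_sqf)
  have "infsum (sqf \<psi>) UNIV \<le> B"
    by (rule infsum_le_finite_sums[OF s]) (use assms in auto)
  then show "l2norm \<psi> \<le> sqrt B" by (simp add: l2norm_sqf)
qed

lemma l2_dom2:
  assumes a: "in_l2 a" and b: "in_l2 b"
    and le: "\<And>k s. cmod (f k s) \<le> cmod (a k s) + cmod (b k s)"
  shows "in_l2 f" "l2norm f \<le> l2norm a + l2norm b"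
proof -
  have "sum (sqf f) F \<le> (l2norm a + l2norm b)\<^sup>2" if F: "finite F" for F
  proof -
    let ?fa = "\<lambda>p. cmod (a (fst p) (snd p))" and ?fb = "\<lambda>p. cmod (b (fst p) (snd p))"
    have "sqrt (sum (sqf f) F) = L2_set (\<lambda>p. cmod (f (fst p) (snd p))) F"
      by (simp add: L2_set_def sqf_def case_prod_beta)
    also have "\<dots> \<le> L2_set (\<lambda>p. ?fa p + ?fb p) F"
    proof (rule L2_set_mono)
      fix i show "cmod (f (fst i) (snd i)) \<le> ?fa i + ?fb i" by (rule le)
    qed simp
    also have "\<dots> \<le> L2_set ?fa F + L2_set ?fb F" by (rule L2_set_triangle_ineq)
    finally have 1: "sqrt (sum (sqf f) F) \<le> L2_set ?fa F + L2_set ?fb F" .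
    have "L2_set ?fa F = sqrt (sum (sqf a) F)"
      by (simp add: L2_set_def sqf_def case_prod_beta)
    also have "\<dots> \<le> l2norm a"
      by (rule real_le_lsqrt[OF l2norm_nonneg l2_fin[OF a F]])
    finally have 2: "L2_set ?fa F \<le> l2norm a" .
    have "L2_set ?fb F = sqrt (sum (sqf b) F)"
      by (simp add: L2_set_def sqf_def case_prod_beta)
    also have "\<dots> \<le> l2norm b"
      by (rule real_le_lsqrt[OF l2norm_nonneg l2_fin[OF b F]])
    finally have 3: "L2_set ?fb F \<le> l2norm b" .
    from 1 2 3 have 4: "sqrt (sum (sqf f) F) \<le> l2norm a + l2norm b" by linarith
    have 5: "0 \<le> sum (sqf f) F" by (rule sum_nonneg) (rule sqf_nonneg)
    have "sum (sqf f) F = (sqrt (sum (sqf f) F))\<^sup>2" using 5 by simp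
    also have "\<dots> \<le> (l2norm a + l2norm b)\<^sup>2"
      by (rule power_mono[OF 4]) (simp add: 5)
    finally show ?thesis .
  qed
  from l2_bound[OF this] show "in_l2 f" "l2norm f \<le> l2norm a + l2norm b"
    by (auto simp: l2norm_nonneg add_nonneg_nonneg)
qed

lemma sqf_zero: "sqf (\<lambda>k s. 0) = (\<lambda>_. 0)"
  by (simp add: sqf_def fun_eq_iff)

lemma l2_zero: "in_l2 (\<lambda>k s. 0)" "l2norm (\<lambda>k s. 0) = 0"
  by (auto simp: in_l2_sqf l2norm_sqf sqf_zero)

lemma l2_dom:
  assumes a: "in_l2 a" and le: "\<And>k s. cmod (f k s) \<le> cmod (a k s)"
  shows "in_l2 f" "l2norm f \<le> l2norm a"
  using l2_dom2[OF a l2_zero(1), of f] le l2_zero(2) by auto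

definition scl :: "complex \<Rightarrow> state \<Rightarrow> state" where
  "scl c \<psi> = (\<lambda>k s. c * \<psi> k s)"

definition addst :: "state \<Rightarrow> state \<Rightarrow> state" where
  "addst f g = (\<lambda>k s. f k s + g k s)"

lemma sqf_scl: "sqf (scl c \<psi>) = (\<lambda>p. (cmod c)\<^sup>2 * sqf \<psi> p)"
  by (simp add: sqf_def scl_def fun_eq_iff norm_mult power_mult_distrib)

lemma l2_scl: "in_l2 \<psi> \<Longrightarrow> in_l2 (scl c \<psi>)" "l2norm (scl c \<psi>) = cmod c * l2norm \<psi>"
  by (auto simp: in_l2_sqf l2norm_sqf sqf_scl summable_on_cmult_right infsum_cmult_right' real_sqrt_mult)

lemma l2_add: "in_l2 f \<Longrightarrow> in_l2 g \<Longrightarrow> in_l2 (addst f g)"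
  "in_l2 f \<Longrightarrow> in_l2 g \<Longrightarrow> l2norm (addst f g) \<le> l2norm f + l2norm g"
  using l2_dom2[of f g "addst f g"] by (auto simp: addst_def norm_triangle_ineq)

lemma l2_reindex:
  assumes "inj h" "\<And>p. sqf \<phi> p = sqf \<psi> (h p)" "in_l2 \<psi>"
  shows "in_l2 \<phi>" "l2norm \<phi> \<le> l2norm \<psi>"
proof -
  have "sum (sqf \<phi>) F \<le> (l2norm \<psi>)\<^sup>2" if "finite F" for F
  proof -
    have ih: "inj_on h F" by (meson assms(1) inj_on_subset subset_UNIV)
    have "sum (sqf \<phi>) F = sum (sqf \<psi> \<circ> h) F"
      using assms(2) by (simp add: comp_def)
    also have "\<dots> = sum (sqf \<psi>) (h ` F)" by (rule sum.reindex[OF ih, symmetric])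
    also have "\<dots> \<le> (l2norm \<psi>)\<^sup>2" using l2_fin[OF assms(3)] that by simp
    finally show ?thesis .
  qed
  from l2_bound[OF this] show "in_l2 \<phi>" "l2norm \<phi> \<le> l2norm \<psi>"
    by (auto simp: l2norm_nonneg)
qed

lemma Q_scl: "Qop (scl c \<psi>) = scl c (Qop \<psi>)"
  by (simp add: Qop_def scl_def fun_eq_iff)

lemma gen_scl: "gen_op g (scl c \<psi>) = scl c (gen_op g \<psi>)"
  by (cases g) (auto simp: Splus_def Sminus_def coin_op_def scl_def fun_eq_iff sum_distrib_left mult.left_commute)

lemma unitary2_norm:
  assumes "unitary2 U"
  shows "(cmod (U True True * x + U True False * y))\<^sup>2 + (cmod (U False True * x + U False False * y))\<^sup>2
         = (cmod x)\<^sup>2 + (cmod y)\<^sup>2"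
proof -
  obtain a b c d where abcd: "a = U True True" "b = U True False" "c = U False True" "d = U False False"
    by blast
  from assms have u: "\<And>i j. (\<Sum>l\<in>UNIV. cnj (U l i) * U l j) = (if i = j then 1 else 0)"
    unfolding unitary2_def by blast
  have P1: "cnj a * a + cnj c * c = 1" using u[of True True] by (simp add: UNIV_bool abcd add.commute)
  have P2: "cnj b * b + cnj d * d = 1" using u[of False False] by (simp add: UNIV_bool abcd add.commute)
  have P3: "cnj a * b + cnj c * d = 0" using u[of True False] by (simp add: UNIV_bool abcd add.commute)
  have P4: "a * cnj b + c * cnj d = 0" using arg_cong[OF P3, of cnj] by (simp add: mult.commute)
  have "complex_of_real ((cmod (a * x + b * y))\<^sup>2 + (cmod (c * x + d * y))\<^sup>2)
     = (a * x + b * y) * cnj (a * x + b * y) + (c * x + d * y) * cnj (c * x + d * y)"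
    by (simp only: of_real_add complex_norm_square)
  also have "\<dots> = x * cnj x * (cnj a * a + cnj c * c) + y * cnj y * (cnj b * b + cnj d * d)
      + cnj x * y * (cnj a * b + cnj c * d) + x * cnj y * (a * cnj b + c * cnj d)"
    by (simp add: algebra_simps)
  also have "\<dots> = x * cnj x + y * cnj y" using P1 P2 P3 P4 by simp
  also have "\<dots> = complex_of_real ((cmod x)\<^sup>2 + (cmod y)\<^sup>2)"
    by (simp only: of_real_add complex_norm_square)
  finally show ?thesis unfolding abcd using of_real_eq_iff by blast
qed

lemma coin_expand: "coin_op C \<psi> k s = C k s True * \<psi> k True + C k s False * \<psi> k False"
  by (simp add: coin_op_def UNIV_bool)

lemma coin_l2:
  assumes U: "\<And>k. unitary2 (C k)" and \<psi>: "in_l2 \<psi>"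
  shows "in_l2 (coin_op C \<psi>)" "l2norm (coin_op C \<psi>) \<le> l2norm \<psi>"
proof -
  have "sum (sqf (coin_op C \<psi>)) F \<le> (l2norm \<psi>)\<^sup>2" if F: "finite F" for F
  proof -
    let ?G = "fst ` F \<times> (UNIV :: bool set)"
    have fG: "finite ?G" using F by simp
    have "sum (sqf (coin_op C \<psi>)) F \<le> sum (sqf (coin_op C \<psi>)) ?G"
      by (rule sum_mono2[OF fG]) (auto simp: sqf_nonneg intro: rev_image_eqI)
    also have "\<dots> = (\<Sum>k\<in>fst ` F. \<Sum>s\<in>UNIV. sqf (coin_op C \<psi>) (k, s))"
      by (simp add: sum.cartesian_product)
    also have "\<dots> = (\<Sum>k\<in>fst ` F. \<Sum>s\<in>UNIV. sqf \<psi> (k, s))"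
    proof (rule sum.cong[OF refl])
      fix k
      show "(\<Sum>s\<in>UNIV. sqf (coin_op C \<psi>) (k, s)) = (\<Sum>s\<in>UNIV. sqf \<psi> (k, s))"
        using unitary2_norm[OF U[of k], of "\<psi> k True" "\<psi> k False"]
        by (simp add: UNIV_bool sqf_def coin_expand)
    qed
    also have "\<dots> = sum (sqf \<psi>) ?G" by (simp add: sum.cartesian_product)
    also have "\<dots> \<le> (l2norm \<psi>)\<^sup>2" by (rule l2_fin[OF \<psi> fG])
    finally show ?thesis .
  qed
  from l2_bound[OF this] show "in_l2 (coin_op C \<psi>)" "l2norm (coin_op C \<psi>) \<le> l2norm \<psi>"
    by (auto simp: l2norm_nonneg)
qed

lemma Q_coin: "Qop (coin_op C \<psi>) = coin_op C (Qop \<psi>)"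
  by (simp add: Qop_def coin_expand fun_eq_iff algebra_simps)

lemma Splus_l2: assumes "in_l2 \<psi>"
  shows "in_l2 (Splus \<psi>)" "l2norm (Splus \<psi>) \<le> l2norm \<psi>"
proof -
  define h :: "int \<times> bool \<Rightarrow> int \<times> bool" where "h = (\<lambda>(k, s). if s then (k - 1, True) else (k, False))"
  have "inj h" by (auto simp: inj_def h_def split: if_splits)
  moreover have "\<And>p. sqf (Splus \<psi>) p = sqf \<psi> (h p)"
    by (auto simp: sqf_def h_def Splus_def split: prod.splits)
  ultimately show "in_l2 (Splus \<psi>)" "l2norm (Splus \<psi>) \<le> l2norm \<psi>"
    using l2_reindex assms by blast+
qed

lemma Sminus_l2: assumes "in_l2 \<psi>"
  shows "in_l2 (Sminus \<psi>)" "l2norm (Sminus \<psi>) \<le> l2norm \<psi>"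
proof -
  define h :: "int \<times> bool \<Rightarrow> int \<times> bool" where "h = (\<lambda>(k, s). if s then (k, True) else (k + 1, False))"
  have "inj h" by (auto simp: inj_def h_def split: if_splits)
  moreover have "\<And>p. sqf (Sminus \<psi>) p = sqf \<psi> (h p)"
    by (auto simp: sqf_def h_def Sminus_def split: prod.splits)
  ultimately show "in_l2 (Sminus \<psi>)" "l2norm (Sminus \<psi>) \<le> l2norm \<psi>"
    using l2_reindex assms by blast+
qed

lemma Splus_Q: assumes "\<psi> \<in> domQ" shows "in_l2 (Qop (Splus \<psi>))"
proof (rule l2_dom2(1)[of "Splus (Qop \<psi>)" "Splus \<psi>"])
  show "in_l2 (Splus (Qop \<psi>))" "in_l2 (Splus \<psi>)" using assms Splus_l2 by (auto simp: domQ_def)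
  fix k s
  show "cmod (Qop (Splus \<psi>) k s) \<le> cmod (Splus (Qop \<psi>) k s) + cmod (Splus \<psi> k s)"
  proof (cases s)
    case True
    have "Qop (Splus \<psi>) k s = Splus (Qop \<psi>) k s + Splus \<psi> k s"
      using True by (simp add: Qop_def Splus_def algebra_simps)
    then show ?thesis by (simp add: norm_triangle_ineq)
  next
    case False
    have "Qop (Splus \<psi>) k s = Splus (Qop \<psi>) k s"
      using False by (simp add: Qop_def Splus_def algebra_simps)
    then show ?thesis by simp
  qed
qed

lemma Sminus_Q: assumes "\<psi> \<in> domQ" shows "in_l2 (Qop (Sminus \<psi>))"
proof (rule l2_dom2(1)[of "Sminus (Qop \<psi>)" "Sminus \<psi>"])
  show "in_l2 (Sminus (Qop \<psi>))" "in_l2 (Sminus \<psi>)" using assms Sminus_l2 by (auto simp: domQ_def)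
  fix k s
  show "cmod (Qop (Sminus \<psi>) k s) \<le> cmod (Sminus (Qop \<psi>) k s) + cmod (Sminus \<psi> k s)"
  proof (cases s)
    case False
    have "Qop (Sminus \<psi>) k s = Sminus (Qop \<psi>) k s - Sminus \<psi> k s"
      using False by (simp add: Qop_def Sminus_def algebra_simps)
    then show ?thesis by (simp add: norm_triangle_ineq4)
  next
    case True
    have "Qop (Sminus \<psi>) k s = Sminus (Qop \<psi>) k s"
      using True by (simp add: Qop_def Sminus_def algebra_simps)
    then show ?thesis by simp
  qed
qed

lemma gen_dom:
  assumes "valid_gen g" "\<psi> \<in> domQ"
  shows "gen_op g \<psi> \<in> domQ" "l2norm (gen_op g \<psi>) \<le> l2norm \<psi>"
proof -
  have "gen_op g \<psi> \<in> domQ \<and> l2norm (gen_op g \<psi>) \<le> l2norm \<psi>"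
  proof (cases g)
    case ShiftPlus
    then show ?thesis using assms Splus_l2 Splus_Q by (auto simp: domQ_def)
  next
    case ShiftMinus
    then show ?thesis using assms Sminus_l2 Sminus_Q by (auto simp: domQ_def)
  next
    case (Coin C)
    then have U: "\<And>k. unitary2 (C k)" using assms(1) by (simp add: valid_gen_def)
    then show ?thesis using assms(2) coin_l2[OF U] Coin by (auto simp: domQ_def Q_coin)
  qed
  then show "gen_op g \<psi> \<in> domQ" "l2norm (gen_op g \<psi>) \<le> l2norm \<psi>" by auto
qed

definition good :: "(state \<Rightarrow> state) \<Rightarrow> bool" where
  "good W \<longleftrightarrow> (\<forall>c \<psi>. W (scl c \<psi>) = scl c (W \<psi>)) \<and>
     (\<forall>\<psi>\<in>domQ. W \<psi> \<in> domQ \<and> l2norm (W \<psi>) \<le> l2norm \<psi>)"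

lemma good_id: "good id" by (simp add: good_def)

lemma good_comp: assumes "good W" "good V" shows "good (W \<circ> V)"
proof -
  have "l2norm (W (V \<psi>)) \<le> l2norm \<psi>" "W (V \<psi>) \<in> domQ" if "\<psi> \<in> domQ" for \<psi>
  proof -
    have "V \<psi> \<in> domQ" "l2norm (V \<psi>) \<le> l2norm \<psi>" using assms(2) that by (auto simp: good_def)
    moreover then have "W (V \<psi>) \<in> domQ" "l2norm (W (V \<psi>)) \<le> l2norm (V \<psi>)"
      using assms(1) by (auto simp: good_def)
    ultimately show "l2norm (W (V \<psi>)) \<le> l2norm \<psi>" "W (V \<psi>) \<in> domQ" by auto
  qed
  then show ?thesis using assms by (auto simp: good_def)
qed

lemma good_pow: "good W \<Longrightarrow> good (W ^^ n)"
  by (induction n) (auto simp: good_id good_comp)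

lemma good_walk: "is_walk gs \<Longrightarrow> good (walk_op gs)"
proof (induction gs)
  case Nil
  then show ?case using good_id by (simp add: walk_op_def id_def)
next
  case (Cons g gs)
  have g: "good (gen_op g)" using Cons.prems gen_dom gen_scl by (auto simp: good_def is_walk_def)
  have e: "walk_op (g # gs) = gen_op g \<circ> walk_op gs" by (simp add: walk_op_def)
  have "good (walk_op gs)" using Cons by (simp add: is_walk_def)
  then show ?case unfolding e by (rule good_comp[OF g])
qed



definition ev :: "state \<Rightarrow> state" where "ev \<psi> = (\<lambda>k. \<psi> (2 * k))"
definition od :: "state \<Rightarrow> state" where "od \<psi> = (\<lambda>k. \<psi> (2 * k + 1))"

lemma eo_ext: assumes "ev \<phi> = ev \<phi>'" "od \<phi> = od \<phi>'" shows "\<phi> = \<phi>'"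
proof (rule ext)
  fix n
  show "\<phi> n = \<phi>' n"
  proof (cases "even n")
    case True
    then obtain k where "n = 2 * k" by blast
    then show ?thesis using fun_cong[OF assms(1), of k] by (simp add: ev_def)
  next
    case False
    then obtain k where "n = 2 * k + 1" using oddE by blast
    then show ?thesis using fun_cong[OF assms(2), of k] by (simp add: od_def)
  qed
qed

lemma ev_dsum[simp]: "ev (walk_dsum X Y \<psi>) = X (ev \<psi>)"
  by (simp add: walk_dsum_def ev_def od_def fun_eq_iff)

lemma od_dsum[simp]: "od (walk_dsum X Y \<psi>) = Y (od \<psi>)"
  by (simp add: walk_dsum_def ev_def od_def fun_eq_iff)

lemma dsum_pow: "(walk_dsum X Y) ^^ n = walk_dsum (X ^^ n) (Y ^^ n)"
proof (induction n)
  case 0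
  show ?case by (rule ext, rule eo_ext) simp_all
next
  case (Suc n)
  show ?case by (rule ext, rule eo_ext) (simp_all add: Suc)
qed

lemma ev_Q: "ev (Qop \<psi>) = scl 2 (Qop (ev \<psi>))"
  by (simp add: ev_def Qop_def scl_def fun_eq_iff)

lemma od_Q: "od (Qop \<psi>) = addst (scl 2 (Qop (od \<psi>))) (od \<psi>)"
  by (simp add: od_def Qop_def scl_def addst_def fun_eq_iff algebra_simps)

definition he :: "int \<times> bool \<Rightarrow> int \<times> bool" where "he = (\<lambda>(k, s). (2 * k, s))"
definition ho :: "int \<times> bool \<Rightarrow> int \<times> bool" where "ho = (\<lambda>(k, s). (2 * k + 1, s))"

lemma inj_he: "inj he" by (auto simp: inj_def he_def)
lemma inj_ho: "inj ho" by (auto simp: inj_def ho_def)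
lemma sqf_ev: "sqf (ev \<psi>) = sqf \<psi> \<circ> he" by (auto simp: sqf_def ev_def he_def fun_eq_iff)
lemma sqf_od: "sqf (od \<psi>) = sqf \<psi> \<circ> ho" by (auto simp: sqf_def od_def ho_def fun_eq_iff)
lemma he_ho_disj: "range he \<inter> range ho = {}"
  by (auto simp: he_def ho_def) presburger
lemma he_ho_un: "range he \<union> range ho = UNIV"
proof -
  have "p \<in> range he \<union> range ho" for p
  proof (cases p)
    case (Pair n s)
    show ?thesis
    proof (cases "even n")
      case True
      then obtain k where "n = 2 * k" by blast
      then have "p = he (k, s)" using Pair by (simp add: he_def)
      then show ?thesis by blast
    next
      case False
      then obtain k where "n = 2 * k + 1" using oddE by blast
      then have "p = ho (k, s)" using Pair by (simp add: ho_def)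
      then show ?thesis by blast
    qed
  qed
  then show ?thesis by blast
qed

lemma l2_split: "in_l2 \<psi> \<longleftrightarrow> in_l2 (ev \<psi>) \<and> in_l2 (od \<psi>)"
proof -
  have e: "in_l2 (ev \<psi>) \<longleftrightarrow> sqf \<psi> summable_on range he"
    unfolding in_l2_sqf sqf_ev by (rule summable_on_reindex[OF inj_he, symmetric])
  have o: "in_l2 (od \<psi>) \<longleftrightarrow> sqf \<psi> summable_on range ho"
    unfolding in_l2_sqf sqf_od by (rule summable_on_reindex[OF inj_ho, symmetric])
  show ?thesis
  proof
    assume "in_l2 \<psi>"
    then have s: "sqf \<psi> summable_on UNIV" by (simp add: in_l2_sqf)
    show "in_l2 (ev \<psi>) \<and> in_l2 (od \<psi>)" unfolding e o
      using summable_on_subset_banach[OF s] by blast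
  next
    assume "in_l2 (ev \<psi>) \<and> in_l2 (od \<psi>)"
    then have "sqf \<psi> summable_on (range he \<union> range ho)"
      using e o summable_on_Un_disjoint[OF _ _ he_ho_disj] by blast
    then show "in_l2 \<psi>" by (simp add: he_ho_un in_l2_sqf)
  qed
qed

lemma l2_split_norm:
  assumes "in_l2 \<psi>"
  shows "(l2norm \<psi>)\<^sup>2 = (l2norm (ev \<psi>))\<^sup>2 + (l2norm (od \<psi>))\<^sup>2"
proof -
  have s: "sqf \<psi> summable_on UNIV" using assms by (simp add: in_l2_sqf)
  have "(l2norm \<psi>)\<^sup>2 = infsum (sqf \<psi>) (range he \<union> range ho)"
    by (simp add: l2norm_sq he_ho_un)
  also have "\<dots> = infsum (sqf \<psi>) (range he) + infsum (sqf \<psi>) (range ho)"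
    by (rule infsum_Un_disjoint[OF summable_on_subset_banach[OF s] summable_on_subset_banach[OF s] he_ho_disj]) auto
  also have "\<dots> = (l2norm (ev \<psi>))\<^sup>2 + (l2norm (od \<psi>))\<^sup>2"
    by (simp add: l2norm_sq sqf_ev sqf_od infsum_reindex[OF inj_he] infsum_reindex[OF inj_ho])
  finally show ?thesis .
qed

lemma dom_split: "\<psi> \<in> domQ \<longleftrightarrow> ev \<psi> \<in> domQ \<and> od \<psi> \<in> domQ"
proof -
  have a: "in_l2 (scl 2 (Qop \<phi>)) \<longleftrightarrow> in_l2 (Qop \<phi>)" for \<phi>
    using l2_scl(1)[of "scl 2 (Qop \<phi>)" "1/2"] l2_scl(1)[of "Qop \<phi>" 2]
    by (auto simp: scl_def)
  have b: "in_l2 (od \<psi>) \<Longrightarrow> in_l2 (addst (scl 2 (Qop (od \<psi>))) (od \<psi>)) \<longleftrightarrow> in_l2 (Qop (od \<psi>))"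
  proof -
    assume o: "in_l2 (od \<psi>)"
    show ?thesis
    proof
      assume h: "in_l2 (addst (scl 2 (Qop (od \<psi>))) (od \<psi>))"
      have "in_l2 (scl 2 (Qop (od \<psi>)))"
      proof (rule l2_dom2(1)[OF h o])
        fix k s
        show "cmod (scl 2 (Qop (od \<psi>)) k s) \<le> cmod (addst (scl 2 (Qop (od \<psi>))) (od \<psi>) k s) + cmod (od \<psi> k s)"
          using norm_triangle_ineq4[of "addst (scl 2 (Qop (od \<psi>))) (od \<psi>) k s" "od \<psi> k s"]
          by (simp add: addst_def)
      qed
      then show "in_l2 (Qop (od \<psi>))" using a by blast
    next
      assume "in_l2 (Qop (od \<psi>))"
      then show "in_l2 (addst (scl 2 (Qop (od \<psi>))) (od \<psi>))" using l2_add(1) l2_scl(1) o by blast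
    qed
  qed
  show ?thesis
    unfolding domQ_def using l2_split[of \<psi>] l2_split[of "Qop \<psi>"] a b
    by (auto simp: ev_Q od_Q)
qed



lemma zero_st: "scl 0 \<phi> = (\<lambda>k s. 0)" by (simp add: scl_def)

lemma good_zero: assumes "good W" shows "W (\<lambda>k s. 0) = (\<lambda>k s. 0)"
proof -
  have "W (scl 0 (\<lambda>k s. 0)) = scl 0 (W (\<lambda>k s. 0))" using assms by (simp only: good_def)
  then show ?thesis by (simp only: zero_st)
qed

lemma Q_zero: "Qop (\<lambda>k s. 0) = (\<lambda>k s. 0)" by (simp add: Qop_def)

lemma zero_dom: "(\<lambda>k s. 0) \<in> domQ" by (simp add: domQ_def Q_zero l2_zero)

lemma key:
  assumes gA: "good A" and gB: "good B" and \<psi>: "\<psi> \<in> domQ"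
  shows "\<exists>r. 0 \<le> r \<and> r \<le> 2 * l2norm (Qop ((B ^^ t) (od \<psi>))) + l2norm (od \<psi>)
     \<and> 2 * l2norm (Qop ((B ^^ t) (od \<psi>))) \<le> r + l2norm (od \<psi>)
     \<and> l2norm (Qop ((walk_dsum A B ^^ t) \<psi>)) = sqrt (4 * (l2norm (Qop ((A ^^ t) (ev \<psi>))))\<^sup>2 + r\<^sup>2)"
proof -
  define x where "x = ev \<psi>"
  define y where "y = od \<psi>"
  have x: "x \<in> domQ" and y: "y \<in> domQ" using \<psi> dom_split[of \<psi>] x_def y_def by simp_all
  have gAt: "good (A ^^ t)" and gBt: "good (B ^^ t)" using gA gB good_pow by auto
  define ax where "ax = (A ^^ t) x"
  define by' where "by' = (B ^^ t) y"
  have ax: "ax \<in> domQ" using gAt x ax_def by (auto simp: good_def)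
  have by': "by' \<in> domQ" "l2norm by' \<le> l2norm y" using gBt y by'_def by (auto simp: good_def)
  define \<phi> where "\<phi> = (walk_dsum A B ^^ t) \<psi>"
  have e\<phi>: "ev \<phi> = ax" and o\<phi>: "od \<phi> = by'"
    by (simp_all add: \<phi>_def dsum_pow ax_def by'_def x_def y_def)
  have \<phi>: "\<phi> \<in> domQ" using dom_split[of \<phi>] e\<phi> o\<phi> ax by' by simp
  then have Q\<phi>: "in_l2 (Qop \<phi>)" by (simp add: domQ_def)
  define r where "r = l2norm (od (Qop \<phi>))"
  have odQ: "od (Qop \<phi>) = addst (scl 2 (Qop by')) by'" by (simp add: od_Q o\<phi>)
  have evQ: "ev (Qop \<phi>) = scl 2 (Qop ax)" by (simp add: ev_Q e\<phi>)
  have l2a: "in_l2 (Qop ax)" "in_l2 (Qop by')" "in_l2 by'" using ax by' by (auto simp: domQ_def)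
  have "(l2norm (Qop \<phi>))\<^sup>2 = (l2norm (scl 2 (Qop ax)))\<^sup>2 + r\<^sup>2"
    using l2_split_norm[OF Q\<phi>] evQ r_def by simp
  also have "\<dots> = 4 * (l2norm (Qop ax))\<^sup>2 + r\<^sup>2" by (simp add: l2_scl power_mult_distrib)
  finally have sq: "(l2norm (Qop \<phi>))\<^sup>2 = 4 * (l2norm (Qop ax))\<^sup>2 + r\<^sup>2" .
  have "l2norm (Qop \<phi>) = sqrt ((l2norm (Qop \<phi>))\<^sup>2)" by (simp add: l2norm_nonneg)
  then have n: "l2norm (Qop \<phi>) = sqrt (4 * (l2norm (Qop ax))\<^sup>2 + r\<^sup>2)" by (simp only: sq)
  have r0: "0 \<le> r" unfolding r_def by (rule l2norm_nonneg)
  have r1: "r \<le> 2 * l2norm (Qop by') + l2norm y"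
  proof -
    have "r \<le> l2norm (scl 2 (Qop by')) + l2norm by'"
      unfolding r_def odQ by (rule l2_add(2)[OF l2_scl(1)[OF l2a(2)] l2a(3)])
    then show ?thesis using by'(2) by (simp add: l2_scl)
  qed
  have r2: "2 * l2norm (Qop by') \<le> r + l2norm y"
  proof -
    have "l2norm (scl 2 (Qop by')) \<le> l2norm (addst (scl 2 (Qop by')) by') + l2norm by'"
    proof (rule l2_dom2(2))
      show "in_l2 (addst (scl 2 (Qop by')) by')" by (rule l2_add(1)[OF l2_scl(1)[OF l2a(2)] l2a(3)])
      show "in_l2 by'" by (rule l2a(3))
      fix k s
      show "cmod (scl 2 (Qop by') k s) \<le> cmod (addst (scl 2 (Qop by')) by' k s) + cmod (by' k s)"
        using norm_triangle_ineq4[of "addst (scl 2 (Qop by')) by' k s" "by' k s"]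
        by (simp add: addst_def)
    qed
    then show ?thesis using by'(2) by (simp add: l2_scl r_def odQ)
  qed
  show ?thesis
    apply (rule exI[of _ r])
    using r1 r2 n r0 by (simp add: \<phi>_def ax_def by'_def x_def y_def)
qed



lemma vs_nonneg: "0 \<le> vel_state W \<psi>"
  unfolding vel_state_def
  by (rule le_Limsup) (auto simp: l2norm_nonneg)

definition dlt :: state where "dlt = (\<lambda>k s. if k = 0 \<and> s then 1 else 0)"

lemma dlt: "dlt \<in> domQ" "l2norm dlt = 1"
proof -
  have sq: "sqf dlt = (\<lambda>p. if (0, True) = p then 1 else 0)"
    by (auto simp: sqf_def dlt_def fun_eq_iff)
  have "sum (sqf dlt) F \<le> 1" if "finite F" for F
    using that by (simp add: sq sum.delta)
  from l2_bound[OF this] have i: "in_l2 dlt" and le: "l2norm dlt \<le> 1" by auto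
  have "1 \<le> (l2norm dlt)\<^sup>2" using l2_fin[OF i, of "{(0, True)}"] by (simp add: sq)
  then have "1 \<le> l2norm dlt" using power2_le_imp_le[of 1 "l2norm dlt"] l2norm_nonneg by simp
  then show "l2norm dlt = 1" using le by simp
  have "Qop dlt = (\<lambda>k s. 0)" by (auto simp: Qop_def dlt_def fun_eq_iff)
  then show "dlt \<in> domQ" using i l2_zero by (simp add: domQ_def)
qed

lemma vel_nonneg: "0 \<le> vel W"
proof -
  have "vel_state W dlt \<le> vel W" unfolding vel_def by (rule SUP_upper) (simp add: dlt)
  then show ?thesis using vs_nonneg order.trans by blast
qed

lemma vs_le_vel: "\<psi> \<in> domQ \<Longrightarrow> l2norm \<psi> = 1 \<Longrightarrow> vel_state W \<psi> \<le> vel W"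
  unfolding vel_def by (rule SUP_upper) simp

lemma ev_inv: assumes "(\<epsilon>::real) > 0" shows "eventually (\<lambda>t. 1 \<le> real t * \<epsilon>) sequentially"
proof -
  obtain n where n: "1 / \<epsilon> < real n" using reals_Archimedean2 by blast
  have "1 \<le> real t * \<epsilon>" if "t \<ge> n" for t
  proof -
    have "1 / \<epsilon> \<le> real t" using n that by linarith
    then show ?thesis using assms by (simp add: divide_le_eq mult.commute)
  qed
  then show ?thesis unfolding eventually_sequentially by blast
qed

lemma norm_pos: assumes "in_l2 x" "x k s \<noteq> 0" shows "l2norm x > 0"
proof -
  have "sqf x (k, s) \<le> (l2norm x)\<^sup>2" using l2_fin[OF assms(1), of "{(k, s)}"] by simp
  moreover have "sqf x (k, s) > 0" using assms(2) by (simp add: sqf_def)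
  ultimately have "(l2norm x)\<^sup>2 > 0" by linarith
  then have "l2norm x \<noteq> 0" by auto
  then show ?thesis using l2norm_nonneg[of x] by (simp add: less_le)
qed

lemma ev_bound:
  assumes gA: "good A" and x: "x \<in> domQ" and vA: "vel A \<le> ereal m" and e: "\<epsilon> > 0"
  shows "eventually (\<lambda>t. l2norm (Qop ((A ^^ t) x)) / real t \<le> l2norm x * m + \<epsilon>) sequentially"
proof (cases "x = (\<lambda>k s. 0)")
  case True
  then have "(A ^^ t) x = (\<lambda>k s. 0)" for t using good_zero[OF good_pow[OF gA]] by simp
  then show ?thesis using e True by (simp add: Q_zero l2_zero less_imp_le)
next
  case False
  then obtain k s where ks: "x k s \<noteq> 0" by (auto simp: fun_eq_iff)
  have ix: "in_l2 x" "in_l2 (Qop x)" using x by (auto simp: domQ_def)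
  define N where "N = l2norm x"
  have N: "N > 0" using norm_pos[OF ix(1) ks] N_def by simp
  define x' where "x' = scl (complex_of_real (1 / N)) x"
  have x': "x' \<in> domQ" using ix l2_scl(1) by (simp add: x'_def domQ_def Q_scl)
  have "l2norm x' = cmod (complex_of_real (1 / N)) * l2norm x" by (simp only: x'_def l2_scl(2))
  also have "\<dots> = (1 / N) * N" using N by (simp only: norm_of_real N_def[symmetric]) simp
  finally have nx': "l2norm x' = 1" using N by simp
  have xx: "x = scl (complex_of_real N) x'" using N by (simp add: x'_def scl_def fun_eq_iff)
  have "vel_state A x' \<le> vel A" by (rule vs_le_vel[OF x' nx'])
  also have "\<dots> \<le> ereal m" by (rule vA)
  also have "\<dots> < ereal (m + \<epsilon> / N)" using e N by simp
  finally have "eventually (\<lambda>t. ereal (l2norm (Qop ((A ^^ t) x')) / real t) < ereal (m + \<epsilon> / N)) sequentially"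
    unfolding vel_state_def by (rule Limsup_lessD)
  then show ?thesis
  proof (rule eventually_mono)
    fix t assume h: "ereal (l2norm (Qop ((A ^^ t) x')) / real t) < ereal (m + \<epsilon> / N)"
    have "(A ^^ t) (scl (complex_of_real N) x') = scl (complex_of_real N) ((A ^^ t) x')"
      using good_pow[OF gA, of t] unfolding good_def by blast
    then have "(A ^^ t) x = scl (complex_of_real N) ((A ^^ t) x')"
      by (simp only: xx[symmetric])
    then have q: "l2norm (Qop ((A ^^ t) x)) = N * l2norm (Qop ((A ^^ t) x'))"
      using N by (simp add: Q_scl l2_scl)
    have h2: "l2norm (Qop ((A ^^ t) x')) / real t \<le> m + \<epsilon> / N" using h by simp
    have "N * (l2norm (Qop ((A ^^ t) x')) / real t) \<le> N * (m + \<epsilon> / N)"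
      by (rule mult_left_mono[OF h2]) (simp add: less_imp_le[OF N])
    moreover have "N * (l2norm (Qop ((A ^^ t) x')) / real t) = l2norm (Qop ((A ^^ t) x)) / real t"
      by (simp only: q times_divide_eq_right)
    moreover have "N * (m + \<epsilon> / N) = l2norm x * m + \<epsilon>"
      using N unfolding N_def by (simp add: distrib_left)
    ultimately show "l2norm (Qop ((A ^^ t) x)) / real t \<le> l2norm x * m + \<epsilon>"
      by linarith
  qed
qed



lemma comb:
  fixes \<alpha> r \<beta> X Y m \<epsilon> t :: real
  assumes a0: "0 \<le> \<alpha>" and r0: "0 \<le> r" and X0: "0 \<le> X" and Y0: "0 \<le> Y"
    and XY: "X\<^sup>2 + Y\<^sup>2 \<le> 1" and m0: "0 \<le> m" and e0: "0 < \<epsilon>" and te: "1 \<le> t * \<epsilon>"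
    and ha: "\<alpha> / t \<le> X * m + \<epsilon>" and hb: "\<beta> / t \<le> Y * m + \<epsilon>" and hr: "r \<le> 2 * \<beta> + Y"
  shows "sqrt (4 * \<alpha>\<^sup>2 + r\<^sup>2) / t \<le> 2 * m + 5 * \<epsilon>"
proof -
  have "0 < t * \<epsilon>" using te by linarith
  then have t: "t > 0" using e0 by (simp add: zero_less_mult_iff)
  have "0 \<le> X\<^sup>2" "0 \<le> Y\<^sup>2" by simp_all
  then have "Y\<^sup>2 \<le> 1" "X\<^sup>2 \<le> 1" using XY by linarith+
  then have Y1: "Y \<le> 1" and X1: "X \<le> 1"
    using power2_le_imp_le[of Y 1] power2_le_imp_le[of X 1] by simp_all
  define P where "P = X * m + \<epsilon>"
  define R where "R = 2 * (Y * m) + 3 * \<epsilon>"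
  have P0: "0 \<le> P" using X0 m0 e0 by (simp add: P_def)
  have R0: "0 \<le> R" using Y0 m0 e0 by (simp add: R_def)
  have a1: "\<alpha> \<le> t * P" using ha t by (simp add: pos_divide_le_eq mult.commute P_def)
  have b1: "\<beta> \<le> t * (Y * m + \<epsilon>)" using hb t by (simp add: pos_divide_le_eq mult.commute)
  have "t * R = 2 * (t * (Y * m + \<epsilon>)) + t * \<epsilon>" by (simp add: R_def algebra_simps)
  then have r1: "r \<le> t * R" using hr b1 Y1 te by linarith
  have sq1: "\<alpha>\<^sup>2 \<le> (t * P)\<^sup>2" by (rule power_mono[OF a1 a0])
  have sq2: "r\<^sup>2 \<le> (t * R)\<^sup>2" by (rule power_mono[OF r1 r0])
  have Xm: "X * m \<le> m" using mult_left_le_one_le[OF m0 X0 X1] by (simp add: mult.commute)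
  have Ym: "Y * m \<le> m" using mult_left_le_one_le[OF m0 Y0 Y1] by (simp add: mult.commute)
  have "(X\<^sup>2 + Y\<^sup>2) * m\<^sup>2 \<le> 1 * m\<^sup>2" by (rule mult_right_mono[OF XY]) simp
  then have XYm: "(X * m)\<^sup>2 + (Y * m)\<^sup>2 \<le> m\<^sup>2" by (simp add: power_mult_distrib algebra_simps)
  have Xe: "(X * m) * \<epsilon> \<le> m * \<epsilon>" using Xm e0 by (simp add: mult_right_mono)
  have Ye: "(Y * m) * \<epsilon> \<le> m * \<epsilon>" using Ym e0 by (simp add: mult_right_mono)
  have ex1: "4 * P\<^sup>2 + R\<^sup>2 = 4 * ((X * m)\<^sup>2 + (Y * m)\<^sup>2) + 8 * ((X * m) * \<epsilon>) + 12 * ((Y * m) * \<epsilon>) + 13 * \<epsilon>\<^sup>2"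
    by (simp add: P_def R_def power2_eq_square algebra_simps)
  have ex2: "(2 * m + 5 * \<epsilon>)\<^sup>2 = 4 * m\<^sup>2 + 20 * (m * \<epsilon>) + 25 * \<epsilon>\<^sup>2"
    by (simp add: power2_eq_square algebra_simps)
  have e2: "0 \<le> \<epsilon>\<^sup>2" by simp
  have h: "4 * P\<^sup>2 + R\<^sup>2 \<le> (2 * m + 5 * \<epsilon>)\<^sup>2" unfolding ex1 ex2
  proof -
    have gen: "\<And>a b c d e f :: real. a \<le> d \<Longrightarrow> b \<le> e \<Longrightarrow> c \<le> e \<Longrightarrow> 0 \<le> f \<Longrightarrow>
      4 * a + 8 * b + 12 * c + 13 * f \<le> 4 * d + 20 * e + 25 * f" by linarith
    show "4 * ((X * m)\<^sup>2 + (Y * m)\<^sup>2) + 8 * ((X * m) * \<epsilon>) + 12 * ((Y * m) * \<epsilon>) + 13 * \<epsilon>\<^sup>2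
      \<le> 4 * m\<^sup>2 + 20 * (m * \<epsilon>) + 25 * \<epsilon>\<^sup>2" by (rule gen[OF XYm Xe Ye e2])
  qed
  have "4 * \<alpha>\<^sup>2 + r\<^sup>2 \<le> 4 * (t * P)\<^sup>2 + (t * R)\<^sup>2" using sq1 sq2 by linarith
  also have "\<dots> = t\<^sup>2 * (4 * P\<^sup>2 + R\<^sup>2)" by (simp add: power_mult_distrib algebra_simps)
  also have "\<dots> \<le> t\<^sup>2 * (2 * m + 5 * \<epsilon>)\<^sup>2" by (rule mult_left_mono[OF h]) simp
  also have "\<dots> = (t * (2 * m + 5 * \<epsilon>))\<^sup>2" by (simp add: power_mult_distrib)
  finally have "4 * \<alpha>\<^sup>2 + r\<^sup>2 \<le> (t * (2 * m + 5 * \<epsilon>))\<^sup>2" .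
  then have "sqrt (4 * \<alpha>\<^sup>2 + r\<^sup>2) \<le> t * (2 * m + 5 * \<epsilon>)"
    by (rule real_le_lsqrt[rotated]) (use t m0 e0 in simp)
  then show ?thesis using t by (simp add: pos_divide_le_eq mult.commute)
qed

lemma upper:
  assumes gA: "good A" and gB: "good B" and \<psi>: "\<psi> \<in> domQ" and n\<psi>: "l2norm \<psi> = 1"
    and vA: "vel A \<le> ereal m" and vB: "vel B \<le> ereal m" and m0: "0 \<le> m"
  shows "vel_state (walk_dsum A B) \<psi> \<le> ereal (2 * m)"
proof (rule ereal_le_epsilon2)
  fix e :: real assume e: "0 < e"
  define \<epsilon> where "\<epsilon> = e / 5"
  have \<epsilon>: "0 < \<epsilon>" using e by (simp add: \<epsilon>_def)
  have x: "ev \<psi> \<in> domQ" and y: "od \<psi> \<in> domQ" using \<psi> dom_split[of \<psi>] by simp_all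
  have "in_l2 \<psi>" using \<psi> by (simp add: domQ_def)
  from l2_split_norm[OF this] n\<psi> have XY: "(l2norm (ev \<psi>))\<^sup>2 + (l2norm (od \<psi>))\<^sup>2 \<le> 1" by simp
  have ev: "eventually (\<lambda>t. (l2norm (Qop ((A ^^ t) (ev \<psi>))) / real t \<le> l2norm (ev \<psi>) * m + \<epsilon>
      \<and> l2norm (Qop ((B ^^ t) (od \<psi>))) / real t \<le> l2norm (od \<psi>) * m + \<epsilon>) \<and> 1 \<le> real t * \<epsilon>) sequentially"
    using eventually_conj[OF eventually_conj[OF ev_bound[OF gA x vA \<epsilon>] ev_bound[OF gB y vB \<epsilon>]] ev_inv[OF \<epsilon>]] .
  have "eventually (\<lambda>t. ereal (l2norm (Qop ((walk_dsum A B ^^ t) \<psi>)) / real t) \<le> ereal (2 * m + e)) sequentially"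
    using ev
  proof (rule eventually_mono)
    fix t assume h: "(l2norm (Qop ((A ^^ t) (ev \<psi>))) / real t \<le> l2norm (ev \<psi>) * m + \<epsilon>
      \<and> l2norm (Qop ((B ^^ t) (od \<psi>))) / real t \<le> l2norm (od \<psi>) * m + \<epsilon>) \<and> 1 \<le> real t * \<epsilon>"
    obtain r where r: "0 \<le> r" "r \<le> 2 * l2norm (Qop ((B ^^ t) (od \<psi>))) + l2norm (od \<psi>)"
      "l2norm (Qop ((walk_dsum A B ^^ t) \<psi>)) = sqrt (4 * (l2norm (Qop ((A ^^ t) (ev \<psi>))))\<^sup>2 + r\<^sup>2)"
      using key[OF gA gB \<psi>, of t] by blast
    have "l2norm (Qop ((walk_dsum A B ^^ t) \<psi>)) / real t \<le> 2 * m + 5 * \<epsilon>"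
      unfolding r(3)
      by (rule comb[OF l2norm_nonneg r(1) l2norm_nonneg l2norm_nonneg XY m0 \<epsilon>]) (use h r(2) in auto)
    then show "ereal (l2norm (Qop ((walk_dsum A B ^^ t) \<psi>)) / real t) \<le> ereal (2 * m + e)"
      by (simp add: \<epsilon>_def)
  qed
  then have "vel_state (walk_dsum A B) \<psi> \<le> ereal (2 * m + e)"
    unfolding vel_state_def by (rule Limsup_bounded)
  then show "vel_state (walk_dsum A B) \<psi> \<le> ereal (2 * m) + ereal e" by simp
qed

lemma norm_one: assumes "(l2norm \<psi>)\<^sup>2 = 1" shows "l2norm \<psi> = 1"
  using assms l2norm_nonneg[of \<psi>] by (simp add: power2_eq_1_iff)

lemma lowerA:
  assumes gA: "good A" and gB: "good B" and x: "x \<in> domQ" and nx: "l2norm x = 1"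
  shows "2 * vel_state A x \<le> vel (walk_dsum A B)"
proof -
  define z :: state where "z = (\<lambda>k s. 0)"
  define \<psi> where "\<psi> = walk_dsum (\<lambda>_. x) (\<lambda>_. z) z"
  have e: "ev \<psi> = x" and o: "od \<psi> = z" by (simp_all add: \<psi>_def)
  have \<psi>: "\<psi> \<in> domQ" using dom_split[of \<psi>] e o x zero_dom z_def by simp
  have "in_l2 \<psi>" using \<psi> by (simp add: domQ_def)
  from l2_split_norm[OF this] have "(l2norm \<psi>)\<^sup>2 = 1" using e o nx l2_zero z_def by simp
  then have n\<psi>: "l2norm \<psi> = 1" by (rule norm_one)
  have q: "l2norm (Qop ((walk_dsum A B ^^ t) \<psi>)) = 2 * l2norm (Qop ((A ^^ t) x))" for t
  proof -
    obtain r where r: "0 \<le> r" "r \<le> 2 * l2norm (Qop ((B ^^ t) (od \<psi>))) + l2norm (od \<psi>)"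
      "l2norm (Qop ((walk_dsum A B ^^ t) \<psi>)) = sqrt (4 * (l2norm (Qop ((A ^^ t) (ev \<psi>))))\<^sup>2 + r\<^sup>2)"
      using key[OF gA gB \<psi>, of t] by blast
    have "(B ^^ t) z = z" using good_zero[OF good_pow[OF gB]] z_def by simp
    then have "r = 0" using r(1,2) o by (simp add: z_def Q_zero l2_zero)
    then have "l2norm (Qop ((walk_dsum A B ^^ t) \<psi>)) = sqrt ((2 * l2norm (Qop ((A ^^ t) x)))\<^sup>2)"
      using r(3) e by (simp add: power_mult_distrib)
    then show ?thesis by (simp only: real_sqrt_abs) (simp add: l2norm_nonneg)
  qed
  have "vel_state (walk_dsum A B) \<psi> = Limsup sequentially (\<lambda>t. ereal 2 * ereal (l2norm (Qop ((A ^^ t) x)) / real t))"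
    unfolding vel_state_def q by simp
  also have "\<dots> = ereal 2 * vel_state A x"
    unfolding vel_state_def by (rule Limsup_ereal_mult_left) simp_all
  finally have "2 * vel_state A x = vel_state (walk_dsum A B) \<psi>" by simp
  also have "\<dots> \<le> vel (walk_dsum A B)" by (rule vs_le_vel[OF \<psi> n\<psi>])
  finally show ?thesis .
qed

lemma lowerB:
  assumes gA: "good A" and gB: "good B" and y: "y \<in> domQ" and ny: "l2norm y = 1"
  shows "2 * vel_state B y \<le> vel (walk_dsum A B)"
proof -
  define z :: state where "z = (\<lambda>k s. 0)"
  define \<psi> where "\<psi> = walk_dsum (\<lambda>_. z) (\<lambda>_. y) z"
  have e: "ev \<psi> = z" and o: "od \<psi> = y" by (simp_all add: \<psi>_def)
  have \<psi>: "\<psi> \<in> domQ" using dom_split[of \<psi>] e o y zero_dom z_def by simp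
  have "in_l2 \<psi>" using \<psi> by (simp add: domQ_def)
  from l2_split_norm[OF this] have "(l2norm \<psi>)\<^sup>2 = 1" using e o ny l2_zero z_def by simp
  then have n\<psi>: "l2norm \<psi> = 1" by (rule norm_one)
  have q: "2 * l2norm (Qop ((B ^^ t) y)) \<le> l2norm (Qop ((walk_dsum A B ^^ t) \<psi>)) + 1" for t
  proof -
    obtain r where r: "0 \<le> r" "2 * l2norm (Qop ((B ^^ t) (od \<psi>))) \<le> r + l2norm (od \<psi>)"
      "l2norm (Qop ((walk_dsum A B ^^ t) \<psi>)) = sqrt (4 * (l2norm (Qop ((A ^^ t) (ev \<psi>))))\<^sup>2 + r\<^sup>2)"
      using key[OF gA gB \<psi>, of t] by blast
    have "(A ^^ t) z = z" using good_zero[OF good_pow[OF gA]] z_def by simp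
    then have "l2norm (Qop ((walk_dsum A B ^^ t) \<psi>)) = r"
      using r(1,3) e by (simp add: z_def Q_zero l2_zero)
    then show ?thesis using r(2) o ny by simp
  qed
  have "2 * vel_state B y \<le> vel_state (walk_dsum A B) \<psi>"
  proof (rule ereal_le_epsilon2)
    fix e :: real assume e: "0 < e"
    have "2 * vel_state B y = ereal 2 * vel_state B y" by simp
    also have "\<dots> = Limsup sequentially (\<lambda>t. ereal 2 * ereal (l2norm (Qop ((B ^^ t) y)) / real t))"
      unfolding vel_state_def by (rule Limsup_ereal_mult_left[symmetric]) simp_all
    also have "\<dots> \<le> Limsup sequentially (\<lambda>t. ereal (l2norm (Qop ((walk_dsum A B ^^ t) \<psi>)) / real t) + ereal e)"
    proof (rule Limsup_mono)
      show "eventually (\<lambda>t. ereal 2 * ereal (l2norm (Qop ((B ^^ t) y)) / real t)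
          \<le> ereal (l2norm (Qop ((walk_dsum A B ^^ t) \<psi>)) / real t) + ereal e) sequentially"
        using ev_inv[OF e]
      proof (rule eventually_mono)
        fix t assume te: "1 \<le> real t * e"
        have t: "real t > 0" using te e by (metis mult_eq_0_iff not_one_le_zero of_nat_0_less_iff gr0I of_nat_0)
        have "2 * l2norm (Qop ((B ^^ t) y)) \<le> l2norm (Qop ((walk_dsum A B ^^ t) \<psi>)) + real t * e"
          using q[of t] te by linarith
        then have "2 * l2norm (Qop ((B ^^ t) y)) / real t \<le> l2norm (Qop ((walk_dsum A B ^^ t) \<psi>)) / real t + e"
          using t by (simp add: divide_le_eq add_divide_distrib algebra_simps)
        then show "ereal 2 * ereal (l2norm (Qop ((B ^^ t) y)) / real t)
          \<le> ereal (l2norm (Qop ((walk_dsum A B ^^ t) \<psi>)) / real t) + ereal e" by simp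
      qed
    qed
    also have "\<dots> = vel_state (walk_dsum A B) \<psi> + ereal e"
      unfolding vel_state_def by (rule Limsup_add_ereal_right) simp_all
    finally show "2 * vel_state B y \<le> vel_state (walk_dsum A B) \<psi> + ereal e" .
  qed
  also have "\<dots> \<le> vel (walk_dsum A B)" by (rule vs_le_vel[OF \<psi> n\<psi>])
  finally show ?thesis .
qed

lemma two_vel_le:
  assumes "\<And>x. x \<in> domQ \<Longrightarrow> l2norm x = 1 \<Longrightarrow> 2 * vel_state A x \<le> V"
  shows "2 * vel A \<le> V"
proof -
  have ne: "{\<psi>. \<psi> \<in> domQ \<and> l2norm \<psi> = 1} \<noteq> {}" using dlt by blast
  have "2 * vel A = (SUP \<psi>\<in>{\<psi>. \<psi> \<in> domQ \<and> l2norm \<psi> = 1}. 2 * vel_state A \<psi>)"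
    unfolding vel_def by (rule SUP_ereal_mult_left[OF ne, symmetric]) (simp_all add: vs_nonneg)
  also have "\<dots> \<le> V" by (rule SUP_least) (use assms in auto)
  finally show ?thesis .
qed

theorem lemma3p5:
  assumes "is_walk w1" and "is_walk w2"
  shows "vel (walk_dsum (walk_op w1) (walk_op w2)) = 2 * max (vel (walk_op w1)) (vel (walk_op w2))"
proof -
  define A where "A = walk_op w1"
  define B where "B = walk_op w2"
  have gA: "good A" and gB: "good B" using assms good_walk A_def B_def by auto
  have a0: "0 \<le> vel A" and b0: "0 \<le> vel B" by (rule vel_nonneg)+
  have "vel (walk_dsum A B) = 2 * max (vel A) (vel B)"
  proof (rule antisym)
    show "vel (walk_dsum A B) \<le> 2 * max (vel A) (vel B)"
    proof (cases "max (vel A) (vel B) = \<infinity>")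
      case True
      then show ?thesis by simp
    next
      case False
      have "0 \<le> max (vel A) (vel B)" using a0 by (simp add: le_max_iff_disj)
      then obtain m where m: "max (vel A) (vel B) = ereal m" using False
        by (cases "max (vel A) (vel B)") auto
      have m0: "0 \<le> m" using \<open>0 \<le> max (vel A) (vel B)\<close> m by simp
      have vA: "vel A \<le> ereal m" and vB: "vel B \<le> ereal m" using m by (metis max.cobounded1 max.cobounded2)+
      have "vel (walk_dsum A B) \<le> ereal (2 * m)"
        unfolding vel_def by (rule SUP_least) (use upper[OF gA gB _ _ vA vB m0] in auto)
      then show ?thesis using m by simp
    qed
    have "2 * vel A \<le> vel (walk_dsum A B)" by (rule two_vel_le) (rule lowerA[OF gA gB])
    moreover have "2 * vel B \<le> vel (walk_dsum A B)" by (rule two_vel_le) (rule lowerB[OF gA gB])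
    ultimately show "2 * max (vel A) (vel B) \<le> vel (walk_dsum A B)"
      by (cases "vel A \<le> vel B") (simp_all add: max_def)
  qed
  then show ?thesis by (simp add: A_def B_def)
qed

end
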